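(* Let $\mathcal{H}=(V,E)$ be a linear hypergraph without loop with $n$ vertices, and suppose $E=E'\sqcup E''$ where, with $\mathcal{H}'=(V,E')$: $\mathrm{ar}(\mathcal{H}')\ge\sqrt{n}$; $|e|<\sqrt{n}$ for all $e\in E''$; and for every $e\in E''$ there is $x_0\in e$ with $\mathrm{deg}_{\mathcal{H}}(x_0)\le|e|$. Then $\mathrm{q}(\mathcal{H})\le n$.
   Context: A hypergraph $\mathcal{H}=(V,E)$ has a finite vertex set $V$ and a finite set $E$ of nonempty subsets of $V$ (hyperedges); a loop is a hyperedge with one element; linear means distinct hyperedges share at most one vertex. $\mathrm{deg}_{\mathcal{H}}(x)$ is the number of hyperedges containing $x$. The antirank $\mathrm{ar}$ is the minimum cardinality of a hyperedge ($\infty$ if there are none). The chromatic index $\mathrm{q}(\mathcal{H})$ is the least number of colors in a coloring of hyperedges where distinct intersecting hyperedges get different colors. *)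

theory Defs
  imports Complex_Main "HOL-Library.Extended_Real"
begin

definition hypergraph :: "'a set \<Rightarrow> 'a set set \<Rightarrow> bool" where
  "hypergraph V E \<longleftrightarrow> finite V \<and> (\<forall>e\<in>E. e \<noteq> {} \<and> e \<subseteq> V)"

definition linear_hg :: "'a set set \<Rightarrow> bool" where
  "linear_hg E \<longleftrightarrow> (\<forall>e\<in>E. \<forall>f\<in>E. e \<noteq> f \<longrightarrow> card (e \<inter> f) \<le> 1)"

definition loopless :: "'a set set \<Rightarrow> bool" where
  "loopless E \<longleftrightarrow> (\<forall>e\<in>E. card e \<noteq> 1)"

definition hdeg :: "'a set set \<Rightarrow> 'a \<Rightarrow> nat" where
  "hdeg E x = card {e\<in>E. x \<in> e}"

definition antirank :: "'a set set \<Rightarrow> ereal" where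
  "antirank E = (if E = {} then \<infinity> else ereal (real (Min (card ` E))))"

definition proper_edge_colouring :: "'a set set \<Rightarrow> ('a set \<Rightarrow> nat) \<Rightarrow> nat \<Rightarrow> bool" where
  "proper_edge_colouring E c k \<longleftrightarrow>
     (\<forall>e\<in>E. c e < k) \<and> (\<forall>e\<in>E. \<forall>f\<in>E. e \<noteq> f \<and> e \<inter> f \<noteq> {} \<longrightarrow> c e \<noteq> c f)"

definition chromatic_index :: "'a set set \<Rightarrow> nat" where
  "chromatic_index E = (LEAST k. \<exists>c. proper_edge_colouring E c k)"

end

theory Submission
  imports Defs
begin

definition nb :: "'a set set \<Rightarrow> 'a set \<Rightarrow> 'a set set" where
  "nb S e = {f\<in>S. f \<noteq> e \<and> f \<inter> e \<noteq> {}}"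

definition nbx :: "'a set set \<Rightarrow> 'a set \<Rightarrow> 'a \<Rightarrow> 'a set set" where
  "nbx S e x = {f\<in>S. f \<noteq> e \<and> x \<in> f}"

lemma inter_single:
  assumes "linear_hg E" "e \<in> E" "f \<in> E" "f \<noteq> e" "x \<in> e" "x \<in> f" "finite f"
  shows "f \<inter> e = {x}"
proof -
  have "card (f \<inter> e) \<le> 1" using assms unfolding linear_hg_def by blast
  moreover have "finite (f \<inter> e)" using assms by simp
  moreover have "x \<in> f \<inter> e" using assms by simp
  ultimately show ?thesis using card_le_Suc0_iff_eq by fastforce
qed

lemma finite_nbx:
  assumes fin: "finite V" and sub: "\<forall>f\<in>E. f \<subseteq> V" and SE: "S \<subseteq> E"
  shows "finite (nbx S e x)"
proof -
  have "nbx S e x \<subseteq> Pow V" using sub SE unfolding nbx_def by auto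
  moreover have "finite (Pow V)" using fin by simp
  ultimately show ?thesis by (rule finite_subset)
qed

lemma count_x:
  assumes fin: "finite V" and sub: "\<forall>f\<in>E. f \<subseteq> V" and lin: "linear_hg E"
    and SE: "S \<subseteq> E" and eS: "e \<in> S" and xe: "x \<in> e"
  shows "(\<Sum>f\<in>nbx S e x. card f - 1) \<le> card V - card e"
    and "card (\<Union>f\<in>nbx S e x. f - e) = (\<Sum>f\<in>nbx S e x. card f - 1)"
    and "(\<Union>f\<in>nbx S e x. f - e) \<subseteq> V - e"
proof -
  let ?N = "nbx S e x"
  have fN: "finite ?N" by (rule finite_nbx[OF fin sub SE])
  have mem: "f \<in> E" "f \<noteq> e" "x \<in> f" "finite f" if "f \<in> ?N" for f
  proof -
    show "f \<in> E" "f \<noteq> e" "x \<in> f" using that SE unfolding nbx_def by auto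
    then show "finite f" using sub fin finite_subset by blast
  qed
  have eE: "e \<in> E" using SE eS by blast
  have int: "f \<inter> e = {x}" if "f \<in> ?N" for f
    using inter_single[OF lin eE mem(1)[OF that] mem(2)[OF that] xe mem(3)[OF that] mem(4)[OF that]] .
  have cd: "card (f - e) = card f - 1" if "f \<in> ?N" for f
  proof -
    have "f - e = f - {x}" using int[OF that] by blast
    then show ?thesis using mem(3)[OF that] by simp
  qed
  have disj: "\<forall>f\<in>?N. \<forall>g\<in>?N. f \<noteq> g \<longrightarrow> (f - e) \<inter> (g - e) = {}"
  proof (intro ballI impI)
    fix f g assume f: "f \<in> ?N" and g: "g \<in> ?N" and fg: "f \<noteq> g"
    have "f \<inter> g = {x}"
      using inter_single[OF lin mem(1)[OF g] mem(1)[OF f] fg mem(3)[OF g] mem(3)[OF f] mem(4)[OF f]] .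
    moreover have "(f - e) \<inter> (g - e) \<subseteq> (f \<inter> g) - e" by blast
    ultimately show "(f - e) \<inter> (g - e) = {}" using xe by auto
  qed
  have fin2: "\<forall>f\<in>?N. finite (f - e)" using mem(4) by blast
  have "card (\<Union>f\<in>?N. f - e) = (\<Sum>f\<in>?N. card (f - e))"
    using card_UN_disjoint[OF fN fin2 disj] by simp
  also have "\<dots> = (\<Sum>f\<in>?N. card f - 1)" using cd by simp
  finally show eq: "card (\<Union>f\<in>?N. f - e) = (\<Sum>f\<in>?N. card f - 1)" .
  show "(\<Union>f\<in>?N. f - e) \<subseteq> V - e" using sub mem(1) by blast
  then have "card (\<Union>f\<in>?N. f - e) \<le> card (V - e)" using fin by (simp add: card_mono)
  also have "\<dots> = card V - card e"
  proof -
    have "e \<subseteq> V" using sub eE by blast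
    then show ?thesis using fin by (simp add: card_Diff_subset finite_subset)
  qed
  finally show "(\<Sum>f\<in>?N. card f - 1) \<le> card V - card e" using eq by simp
qed

lemma count_x2:
  assumes fin: "finite V" and sub: "\<forall>f\<in>E. f \<subseteq> V" and lin: "linear_hg E"
    and SE: "S \<subseteq> E" and eS: "e \<in> S" and xe: "x \<in> e" and m: "\<forall>f\<in>S. m \<le> card f"
  shows "(m - 1) * card (nbx S e x) \<le> card V - card e"
proof -
  have "(m - 1) * card (nbx S e x) = (\<Sum>f\<in>nbx S e x. m - 1)" by simp
  also have "\<dots> \<le> (\<Sum>f\<in>nbx S e x. card f - 1)"
  proof (rule sum_mono)
    fix f assume "f \<in> nbx S e x"
    then have "m \<le> card f" using m unfolding nbx_def by blast
    then show "m - 1 \<le> card f - 1" by simp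
  qed
  also have "\<dots> \<le> card V - card e" by (rule count_x(1)[OF assms(1-6)])
  finally show ?thesis .
qed

lemma nb_UN: "nb S e = (\<Union>x\<in>e. nbx S e x)"
  unfolding nb_def nbx_def by auto

lemma card_nb_le:
  assumes "finite e"
  shows "card (nb S e) \<le> (\<Sum>x\<in>e. card (nbx S e x))"
  unfolding nb_UN using card_UN_le[OF assms] by blast


lemma sum_bound_rest:
  assumes "finite A" and "\<forall>x\<in>A. (k - 1) * g x \<le> (b::nat)" and "card A = k - 1" and "k \<ge> 2"
  shows "(\<Sum>x\<in>A. g x) \<le> b"
proof -
  have "(k - 1) * (\<Sum>x\<in>A. g x) = (\<Sum>x\<in>A. (k - 1) * g x)" by (simp add: sum_distrib_left)
  also have "\<dots> \<le> (\<Sum>x\<in>A. b)" by (rule sum_mono) (use assms(2) in blast)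
  also have "\<dots> = (k - 1) * b" using assms(3) by simp
  finally show ?thesis using assms(4) by simp
qed

lemma good2:
  assumes fin: "finite V" and sub: "\<forall>f\<in>E. f \<subseteq> V" and lin: "linear_hg E"
    and SE: "S \<subseteq> E" and eS: "e \<in> S" and mn: "\<forall>f\<in>S. card e \<le> card f"
    and x0: "x0 \<in> e" and deg: "hdeg E x0 \<le> card e" and k2: "2 \<le> card e" and finE: "finite E"
  shows "card (nb S e) < card V"
proof -
  define k where "k = card e"
  have eE: "e \<in> E" using SE eS by blast
  have eV: "e \<subseteq> V" using sub eE by blast
  have fe: "finite e" using eV fin finite_subset by blast
  have kV: "k \<le> card V" unfolding k_def using eV fin by (simp add: card_mono)
  have A: "card (nbx S e x0) \<le> k - 1"
  proof -
    have "nbx S e x0 \<subseteq> {f\<in>E. x0 \<in> f} - {e}" using SE unfolding nbx_def by blast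
    then have "card (nbx S e x0) \<le> card ({f\<in>E. x0 \<in> f} - {e})"
      using finE by (simp add: card_mono)
    also have "\<dots> = hdeg E x0 - 1" unfolding hdeg_def using eE x0 finE by simp
    finally show ?thesis using deg k_def by simp
  qed
  have B: "\<forall>x\<in>e-{x0}. (k - 1) * card (nbx S e x) \<le> card V - k"
    using count_x2[OF fin sub lin SE eS, of _ k] mn k_def by blast
  have D: "(\<Sum>x\<in>e-{x0}. card (nbx S e x)) \<le> card V - k"
    by (rule sum_bound_rest[OF _ B]) (use fe x0 k2 k_def in auto)
  have "card (nb S e) \<le> (\<Sum>x\<in>e. card (nbx S e x))" by (rule card_nb_le[OF fe])
  also have "\<dots> = card (nbx S e x0) + (\<Sum>x\<in>e-{x0}. card (nbx S e x))"
    using sum.remove[OF fe x0] by simp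
  also have "\<dots> \<le> (k - 1) + (card V - k)" using A D by simp
  finally show ?thesis using kV k2 k_def by simp
qed

lemma good1:
  assumes fin: "finite V" and sub: "\<forall>f\<in>E. f \<subseteq> V" and lin: "linear_hg E"
    and SE: "S \<subseteq> E" and eS: "e \<in> S" and mn: "\<forall>f\<in>S. card e \<le> card f"
    and k2: "2 \<le> card e" and big: "card V < card e * card e"
  shows "card (nb S e) < card V"
proof -
  define k where "k = card e"
  define n where "n = card V"
  have eE: "e \<in> E" using SE eS by blast
  have eV: "e \<subseteq> V" using sub eE by blast
  have fe: "finite e" using eV fin finite_subset by blast
  have kV: "k \<le> n" unfolding k_def n_def using eV fin by (simp add: card_mono)
  have B: "\<forall>x\<in>e. (k - 1) * card (nbx S e x) \<le> n - k"
    using count_x2[OF fin sub lin SE eS, of _ k] mn k_def n_def by blast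
  have "(k - 1) * (\<Sum>x\<in>e. card (nbx S e x)) = (\<Sum>x\<in>e. (k - 1) * card (nbx S e x))"
    by (simp add: sum_distrib_left)
  also have "\<dots> \<le> (\<Sum>x\<in>e. n - k)" by (rule sum_mono) (use B in blast)
  also have "\<dots> = k * (n - k)" using k_def by simp
  also have "\<dots> < (k - 1) * n"
  proof -
    have "k * (n - k) + k * k = k * n" using kV by (simp add: diff_mult_distrib2)
    moreover have "(k - 1) * n + n = k * n" using k2 k_def by (simp add: diff_mult_distrib)
    moreover have "n < k * k" using big k_def n_def by simp
    ultimately show ?thesis by linarith
  qed
  finally have "(k - 1) * (\<Sum>x\<in>e. card (nbx S e x)) < (k - 1) * n" .
  then have "(\<Sum>x\<in>e. card (nbx S e x)) < n" by simp
  moreover have "card (nb S e) \<le> (\<Sum>x\<in>e. card (nbx S e x))" by (rule card_nb_le[OF fe])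
  ultimately show ?thesis using n_def by simp
qed


lemma degen:
  assumes fin: "finite V" and sub: "\<forall>f\<in>E. f \<subseteq> V" and lin: "linear_hg E"
    and SE: "S \<subseteq> E" and eS: "e \<in> S" and mn: "\<forall>f\<in>S. card e \<le> card f"
    and k2: "2 \<le> card e" and sq: "card V = card e * card e"
    and many: "card V \<le> card (nb S e)" and xe: "x \<in> e"
  shows "(\<forall>y\<in>V. \<exists>f\<in>S. x \<in> f \<and> y \<in> f) \<and> (\<forall>f\<in>S. x \<in> f \<longrightarrow> card f = card e)"
proof -
  define k where "k = card e"
  define n where "n = card V"
  define N where "N = nbx S e x"
  have eE: "e \<in> E" using SE eS by blast
  have eV: "e \<subseteq> V" using sub eE by blast
  have fe: "finite e" using eV fin finite_subset by blast
  have nk: "n = k * k" using sq k_def n_def by simp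
  have kk: "k * k - k = (k - 1) * k" by (simp add: diff_mult_distrib)
  have B: "\<forall>z\<in>e. card (nbx S e z) \<le> k"
  proof
    fix z assume "z \<in> e"
    then have "(k - 1) * card (nbx S e z) \<le> n - k"
      using count_x2[OF fin sub lin SE eS, of z k] mn k_def n_def by blast
    then have "(k - 1) * card (nbx S e z) \<le> (k - 1) * k" using nk kk by simp
    then show "card (nbx S e z) \<le> k" using k2 k_def by simp
  qed
  have R: "(\<Sum>z\<in>e-{x}. card (nbx S e z)) \<le> (k - 1) * k"
  proof -
    have "(\<Sum>z\<in>e-{x}. card (nbx S e z)) \<le> card (e - {x}) * k"
      using sum_bounded_above[of "e - {x}" "\<lambda>z. card (nbx S e z)" k] B by simp
    then show ?thesis using fe xe k_def by simp
  qed
  have "n \<le> (\<Sum>z\<in>e. card (nbx S e z))" using many card_nb_le[OF fe, of S] n_def by simp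
  also have "\<dots> = card N + (\<Sum>z\<in>e-{x}. card (nbx S e z))"
    using sum.remove[OF fe xe] N_def by simp
  finally have "k * k \<le> card N + (k - 1) * k" using R nk by simp
  moreover have "k * k = (k - 1) * k + k" using k2 k_def by (simp add: diff_mult_distrib)
  ultimately have cN: "card N = k" using B xe N_def by fastforce
  have fN: "finite N" unfolding N_def by (rule finite_nbx[OF fin sub SE])
  have mN: "\<forall>f\<in>N. k \<le> card f" using mn k_def unfolding N_def nbx_def by blast
  have S1: "(\<Sum>f\<in>N. card f - 1) \<le> k * k - k"
    using count_x(1)[OF fin sub lin SE eS xe] N_def nk n_def k_def by simp
  have cardN: "card f = k" if fNm: "f \<in> N" for f
  proof -
    have "(\<Sum>g\<in>N. card g - 1) = (card f - 1) + (\<Sum>g\<in>N-{f}. card g - 1)"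
      using sum.remove[OF fN fNm] by simp
    moreover have "(\<Sum>g\<in>N-{f}. k - 1) \<le> (\<Sum>g\<in>N-{f}. card g - 1)"
      by (rule sum_mono) (use mN in \<open>auto\<close>)
    moreover have "(\<Sum>g\<in>N-{f}. k - 1) = (k - 1) * (k - 1)" using cN fNm fN by simp
    moreover have "k * k - k = (k - 1) * (k - 1) + (k - 1)"
    proof -
      have "k = Suc (k - 1)" using k2 k_def by simp
      then have "(k - 1) * k = (k - 1) * (k - 1) + (k - 1)" by (metis mult_Suc_right add.commute)
      then show ?thesis using kk by simp
    qed
    ultimately have "card f - 1 \<le> k - 1" using S1 by linarith
    moreover have "k \<le> card f" using mN fNm by blast
    ultimately show ?thesis using k2 k_def by linarith
  qed
  have "(\<Sum>f\<in>N. card f - 1) = (\<Sum>f\<in>N. k - 1)" using cardN by simp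
  also have "\<dots> = k * (k - 1)" using cN by simp
  finally have "card (\<Union>f\<in>N. f - e) = k * (k - 1)"
    using count_x(2)[OF fin sub lin SE eS xe] N_def by simp
  moreover have "card (V - e) = k * k - k" using fin eV nk n_def k_def
    by (simp add: card_Diff_subset finite_subset)
  moreover have "k * (k - 1) = k * k - k" by (simp add: diff_mult_distrib2)
  ultimately have "card (\<Union>f\<in>N. f - e) = card (V - e)" by simp
  then have U: "(\<Union>f\<in>N. f - e) = V - e"
    using card_subset_eq[of "V - e"] count_x(3)[OF fin sub lin SE eS xe] fin N_def by auto
  show ?thesis
  proof (intro conjI ballI impI)
    fix y assume yV: "y \<in> V"
    show "\<exists>f\<in>S. x \<in> f \<and> y \<in> f"
    proof (cases "y \<in> e")
      case True then show ?thesis using eS xe by blast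
    next
      case False
      then have "y \<in> (\<Union>f\<in>N. f - e)" using U yV by blast
      then show ?thesis unfolding N_def nbx_def by blast
    qed
  next
    fix f assume "f \<in> S" "x \<in> f"
    then show "card f = card e"
    proof (cases "f = e")
      case False
      then have "f \<in> N" using \<open>f \<in> S\<close> \<open>x \<in> f\<close> unfolding N_def nbx_def by blast
      then show ?thesis using cardN k_def by simp
    qed simp
  qed
qed


lemma two_points:
  assumes lin: "linear_hg E" and "f \<in> E" "g \<in> E" "a \<in> f" "a \<in> g" "b \<in> f" "b \<in> g" "a \<noteq> b" "finite f"
  shows "f = g"
proof (rule ccontr)
  assume "f \<noteq> g"
  then have "card (f \<inter> g) \<le> 1" using assms unfolding linear_hg_def by blast
  moreover have "{a, b} \<subseteq> f \<inter> g" using assms by blast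
  moreover have "finite (f \<inter> g)" using assms by simp
  ultimately have "card {a, b} \<le> 1" using card_mono[of "f \<inter> g" "{a, b}"] by linarith
  then show False using assms(8) by simp
qed

locale aff =
  fixes V :: "'a set" and E :: "'a set set" and k :: nat
  assumes fin: "finite V" and sub: "\<forall>f\<in>E. f \<subseteq> V" and lin: "linear_hg E"
    and ne: "\<forall>f\<in>E. f \<noteq> {}" and k2: "2 \<le> k" and nk: "card V = k * k"
    and full: "\<forall>x\<in>V. (\<forall>y\<in>V. \<exists>f\<in>E. x \<in> f \<and> y \<in> f) \<and> (\<forall>f\<in>E. x \<in> f \<longrightarrow> card f = k)"
begin

lemma finE: "finite E"
proof -
  have "E \<subseteq> Pow V" using sub by blast
  then show ?thesis using fin finite_subset by blast
qed

lemma fin_edge: "f \<in> E \<Longrightarrow> finite f"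
  using sub fin finite_subset by blast

lemma card_edge: "f \<in> E \<Longrightarrow> card f = k"
proof -
  assume fE: "f \<in> E"
  then obtain z where zf: "z \<in> f" using ne by blast
  then have zV: "z \<in> V" using sub fE by blast
  have "(\<forall>y\<in>V. \<exists>f\<in>E. z \<in> f \<and> y \<in> f) \<and> (\<forall>f\<in>E. z \<in> f \<longrightarrow> card f = k)"
    using full zV by (rule bspec)
  then show ?thesis using fE zf by simp
qed

lemma deg:
  assumes xV: "x \<in> V"
  shows "card {f\<in>E. x \<in> f} = k + 1"
proof -
  define D where "D = {f\<in>E. x \<in> f}"
  have fD: "finite D" unfolding D_def using finE by simp
  have disj: "\<forall>f\<in>D. \<forall>g\<in>D. f \<noteq> g \<longrightarrow> (f - {x}) \<inter> (g - {x}) = {}"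
  proof (intro ballI impI)
    fix f g assume f: "f \<in> D" and g: "g \<in> D" and fg: "f \<noteq> g"
    show "(f - {x}) \<inter> (g - {x}) = {}"
    proof (rule ccontr)
      assume "(f - {x}) \<inter> (g - {x}) \<noteq> {}"
      then obtain z where z: "z \<in> f" "z \<in> g" "x \<noteq> z" by blast
      have fg': "f \<in> E" "g \<in> E" "x \<in> f" "x \<in> g" using f g unfolding D_def by auto
      have "f = g" by (rule two_points[OF lin fg'(1,2,3,4) z(1,2,3) fin_edge[OF fg'(1)]])
      then show False using fg by simp
    qed
  qed
  have fin2: "\<forall>f\<in>D. finite (f - {x})" using fin_edge unfolding D_def by blast
  have U: "(\<Union>f\<in>D. f - {x}) = V - {x}"
  proof
    show "(\<Union>f\<in>D. f - {x}) \<subseteq> V - {x}" using sub unfolding D_def by blast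
  next
    show "V - {x} \<subseteq> (\<Union>f\<in>D. f - {x})"
    proof
      fix y assume "y \<in> V - {x}"
      then have "y \<in> V" by simp
      then obtain f where "f \<in> E" "x \<in> f" "y \<in> f" using full xV by meson
      then show "y \<in> (\<Union>f\<in>D. f - {x})" using \<open>y \<in> V - {x}\<close> unfolding D_def by blast
    qed
  qed
  have "card (V - {x}) = (\<Sum>f\<in>D. card (f - {x}))"
    using card_UN_disjoint[OF fD fin2 disj] U by simp
  also have "\<dots> = (\<Sum>f\<in>D. k - 1)"
    by (rule sum.cong) (use card_edge fin_edge in \<open>auto simp: D_def\<close>)
  also have "\<dots> = card D * (k - 1)" by simp
  finally have "card D * (k - 1) = k * k - 1" using xV fin nk by simp
  moreover have "k * k - 1 = (k + 1) * (k - 1)"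
  proof -
    obtain j where "k = Suc j" using k2 by (cases k) auto
    then show ?thesis by (simp add: algebra_simps)
  qed
  ultimately have eq: "card D * (k - 1) = (k + 1) * (k - 1)" by simp
  have k1: "k - 1 \<noteq> 0" using k2 by simp
  have "card D = k + 1" using eq k1 by (simp only: mult_cancel2) simp
  then show ?thesis unfolding D_def .
qed

lemma playfair:
  assumes hE: "h \<in> E" and yV: "y \<in> V" and yh: "y \<notin> h"
  shows "\<exists>!g. g \<in> E \<and> y \<in> g \<and> g \<inter> h = {}"
proof -
  define D where "D = {g\<in>E. y \<in> g}"
  define M where "M = {g\<in>D. g \<inter> h \<noteq> {}}"
  have fD: "finite D" unfolding D_def using finE by simp
  have cD: "card D = k + 1" unfolding D_def using deg[OF yV] .
  have MD: "M \<subseteq> D" unfolding M_def by blast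
  have fM: "finite M" using fD MD finite_subset by blast
  have fh: "finite h" using fin_edge hE by blast
  have ch: "card h = k" using card_edge hE by blast
  have le1: "card M \<le> card h"
  proof -
    define \<psi> where "\<psi> g = (SOME z. z \<in> g \<inter> h)" for g
    have ps: "\<psi> g \<in> g \<inter> h" if "g \<in> M" for g
    proof -
      have "\<exists>z. z \<in> g \<inter> h" using that unfolding M_def by blast
      then show ?thesis unfolding \<psi>_def by (rule someI_ex)
    qed
    have "inj_on \<psi> M"
    proof (rule inj_onI)
      fix g g' assume g: "g \<in> M" and g': "g' \<in> M" and eq: "\<psi> g = \<psi> g'"
      have a: "\<psi> g \<in> g" "\<psi> g \<in> g'" "\<psi> g \<in> h" using ps[OF g] ps[OF g'] eq by auto
      have b: "y \<in> g" "y \<in> g'" "g \<in> E" "g' \<in> E" using g g' unfolding M_def D_def by auto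
      have ne: "y \<noteq> \<psi> g" using a(3) yh by auto
      show "g = g'" by (rule two_points[OF lin b(3) b(4) b(1) b(2) a(1) a(2) ne fin_edge[OF b(3)]])
    qed
    moreover have "\<psi> ` M \<subseteq> h" using ps by blast
    ultimately show ?thesis using card_inj_on_le[of \<psi> M h] fh by simp
  qed
  have le2: "card h \<le> card M"
  proof -
    define \<phi> where "\<phi> z = (SOME g. g \<in> E \<and> y \<in> g \<and> z \<in> g)" for z
    have ph: "\<phi> z \<in> E \<and> y \<in> \<phi> z \<and> z \<in> \<phi> z" if "z \<in> h" for z
    proof -
      have "z \<in> V" using that hE sub by blast
      then have "\<exists>g. g \<in> E \<and> y \<in> g \<and> z \<in> g" using full yV by blast
      then show ?thesis unfolding \<phi>_def by (rule someI_ex)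
    qed
    have "inj_on \<phi> h"
    proof (rule inj_onI)
      fix z z' assume z: "z \<in> h" and z': "z' \<in> h" and eq: "\<phi> z = \<phi> z'"
      show "z = z'"
      proof (rule ccontr)
        assume "z \<noteq> z'"
        have a1: "\<phi> z \<in> E" "z \<in> \<phi> z" "z' \<in> \<phi> z" using ph[OF z] ph[OF z'] eq by auto
        have "\<phi> z = h" by (rule two_points[OF lin a1(1) hE a1(2) z a1(3) z' \<open>z \<noteq> z'\<close> fin_edge[OF a1(1)]])
        then show False using ph[OF z] yh by simp
      qed
    qed
    moreover have "\<phi> ` h \<subseteq> M" using ph unfolding M_def D_def by blast
    ultimately show ?thesis using card_inj_on_le[of \<phi> h M] fM by simp
  qed
  have cM: "card M = k" using le1 le2 ch by linarith
  have "card (D - M) = card D - card M" by (rule card_Diff_subset[OF fM MD])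
  then have "card (D - M) = 1" using cD cM by simp
  then obtain g where DM: "D - M = {g}" by (rule card_1_singletonE)
  show ?thesis
  proof
    have "g \<in> D - M" using DM by simp
    then show "g \<in> E \<and> y \<in> g \<and> g \<inter> h = {}" unfolding D_def M_def by simp
  next
    fix g' assume "g' \<in> E \<and> y \<in> g' \<and> g' \<inter> h = {}"
    then have "g' \<in> D - M" unfolding D_def M_def by simp
    then show "g' = g" using DM by simp
  qed
qed

lemma colour:
  assumes Ene: "E \<noteq> {}"
  shows "\<exists>c. proper_edge_colouring E c (card V)"
proof -
  obtain f0 where f0: "f0 \<in> E" using Ene by blast
  then obtain p where pf: "p \<in> f0" using ne by blast
  then have pV: "p \<in> V" using sub f0 by blast
  define D where "D = {f\<in>E. p \<in> f}"
  have fD: "finite D" unfolding D_def using finE by simp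
  have cD: "card D = k + 1" unfolding D_def using deg[OF pV] .
  obtain b where b: "bij_betw b D {0..<card D}" using ex_bij_betw_finite_nat[OF fD] by blast
  define rep where "rep e = (if p \<in> e then e else THE g. g \<in> E \<and> p \<in> g \<and> g \<inter> e = {})" for e
  have rep1: "rep e = e" if "p \<in> e" for e using that rep_def by simp
  have rep2: "rep e \<in> E \<and> p \<in> rep e \<and> rep e \<inter> e = {}" if "e \<in> E" "p \<notin> e" for e
  proof -
    have "rep e = (THE g. g \<in> E \<and> p \<in> g \<and> g \<inter> e = {})" using that rep_def by simp
    then show ?thesis using theI'[OF playfair[OF that(1) pV that(2)]] by simp
  qed
  have repD: "rep e \<in> D" if "e \<in> E" for e
    using that rep1 rep2 unfolding D_def by (cases "p \<in> e") auto
  define c where "c e = b (rep e)" for e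
  have "proper_edge_colouring E c (card V)"
    unfolding proper_edge_colouring_def
  proof (intro conjI ballI impI)
    fix e assume "e \<in> E"
    then have "c e < k + 1" using repD b cD unfolding c_def bij_betw_def by auto
    moreover have "k + 1 \<le> k * k"
    proof -
      have "2 * k \<le> k * k" using k2 by (rule mult_le_mono1)
      then show ?thesis using k2 by linarith
    qed
    ultimately show "c e < card V" using nk by simp
  next
    fix e f assume e: "e \<in> E" and f: "f \<in> E" and ef: "e \<noteq> f \<and> e \<inter> f \<noteq> {}"
    show "c e \<noteq> c f"
    proof
      assume "c e = c f"
      then have rr: "rep e = rep f" using repD[OF e] repD[OF f] b unfolding c_def bij_betw_def inj_on_def by blast
      obtain y where ye: "y \<in> e" and yf: "y \<in> f" using ef by blast
      show False
      proof (cases "p \<in> e")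
        case pe: True
        show False
        proof (cases "p \<in> f")
          case True then show False using rr rep1 pe ef by simp
        next
          case False then show False using rr rep1[OF pe] rep2[OF f] ye yf by blast
        qed
      next
        case pe: False
        show False
        proof (cases "p \<in> f")
          case True then show False using rr rep1[OF True] rep2[OF e pe] ye yf by blast
        next
          case pf: False
          define g where "g = rep e"
          have g: "g \<in> E" "g \<inter> e = {}" "g \<inter> f = {}" using rep2[OF e pe] rep2[OF f pf] rr g_def by auto
          have yV: "y \<in> V" using ye e sub by blast
          have yg: "y \<notin> g" using g ye by blast
          have "e = f" using playfair[OF g(1) yV yg] e f ye yf g by blast
          then show False using ef by simp
        qed
      qed
    qed
  qed
  then show ?thesis by blast
qed

end


lemma greedy_aux:
  assumes "finite E"
    and good: "\<forall>S\<subseteq>E. S \<noteq> {} \<longrightarrow> (\<exists>e\<in>S. card (nb S e) < n)"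
  shows "S \<subseteq> E \<longrightarrow> (\<exists>c. proper_edge_colouring S c n)"
proof -
  have "finite S \<Longrightarrow> ?thesis"
  proof (induction S rule: finite_psubset_induct)
    case (psubset S)
    show ?case
    proof
      assume SE: "S \<subseteq> E"
      show "\<exists>c. proper_edge_colouring S c n"
      proof (cases "S = {}")
        case True
        then show ?thesis unfolding proper_edge_colouring_def by simp
      next
        case False
        then obtain e where eS: "e \<in> S" and ce: "card (nb S e) < n" using good SE by blast
        have ps: "S - {e} \<subset> S" using eS by blast
        have "S - {e} \<subseteq> E" using SE by blast
        then obtain c where c: "proper_edge_colouring (S - {e}) c n"
          using psubset.IH[OF ps] by blast
        have fnb: "finite (nb S e)" using psubset.hyps unfolding nb_def by simp
        have "card (c ` nb S e) < card {0..<n}"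
          using card_image_le[OF fnb, of c] ce by simp
        then have "\<not> {0..<n} \<subseteq> c ` nb S e" using card_mono[of "c ` nb S e" "{0..<n}"] fnb by auto
        then obtain col where col0: "col \<in> {0..<n}" "col \<notin> c ` nb S e" by blast
        then have col: "col < n" "col \<notin> c ` nb S e" by auto
        have cS: "\<forall>f\<in>S - {e}. c f < n" and cP: "\<forall>f\<in>S - {e}. \<forall>g\<in>S - {e}. f \<noteq> g \<and> f \<inter> g \<noteq> {} \<longrightarrow> c f \<noteq> c g"
          using c unfolding proper_edge_colouring_def by blast+
        have nbc: "col \<noteq> c g" if "g \<in> S" "g \<noteq> e" "g \<inter> e \<noteq> {}" for g
        proof -
          have "g \<in> nb S e" using that unfolding nb_def by blast
          then have "c g \<in> c ` nb S e" by (rule imageI)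
          then show ?thesis using col(2) by metis
        qed
        have "proper_edge_colouring S (c(e := col)) n"
          unfolding proper_edge_colouring_def
        proof (intro conjI ballI impI)
          fix f assume fS: "f \<in> S"
          show "(c(e := col)) f < n"
          proof (cases "f = e")
            case True then show ?thesis using col by simp
          next
            case False then show ?thesis using cS fS by simp
          qed
        next
          fix f g assume f: "f \<in> S" and g: "g \<in> S" and fg: "f \<noteq> g \<and> f \<inter> g \<noteq> {}"
          show "(c(e := col)) f \<noteq> (c(e := col)) g"
          proof (cases "f = e")
            case True
            then have "g \<noteq> e" "g \<inter> e \<noteq> {}" using fg by auto
            then have "col \<noteq> c g" using nbc g by blast
            then show ?thesis using True \<open>g \<noteq> e\<close> by simp
          next
            case False
            note fe = False
            show ?thesis
            proof (cases "g = e")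
              case True
              then have "f \<noteq> e" "f \<inter> e \<noteq> {}" using fg by auto
              then have "col \<noteq> c f" using nbc f by blast
              then show ?thesis using True \<open>f \<noteq> e\<close> by simp
            next
              case False
              then have "c f \<noteq> c g" using cP f g fe fg by blast
              then show ?thesis using False fe by simp
            qed
          qed
        qed
        then show ?thesis by blast
      qed
    qed
  qed
  moreover have "S \<subseteq> E \<Longrightarrow> finite S" using assms(1) finite_subset by blast
  ultimately show ?thesis by blast
qed

theorem corollary5p7:
  fixes V :: "'a set" and E E' E'' :: "'a set set" and n :: nat
  assumes "hypergraph V E"
    and "linear_hg E"
    and "loopless E"
    and "n = card V"
    and "E = E' \<union> E''" and "E' \<inter> E'' = {}"
    and "antirank E' \<ge> ereal (sqrt (real n))"
    and "\<forall>e\<in>E''. real (card e) < sqrt (real n)"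
    and "\<forall>e\<in>E''. \<exists>x0\<in>e. hdeg E x0 \<le> card e"
  shows "chromatic_index E \<le> n"
proof -
  have fin: "finite V" using assms(1) unfolding hypergraph_def by blast
  have sub: "\<forall>f\<in>E. f \<subseteq> V" using assms(1) unfolding hypergraph_def by blast
  have ne: "\<forall>f\<in>E. f \<noteq> {}" using assms(1) unfolding hypergraph_def by blast
  have lin: "linear_hg E" by (rule assms(2))
  have finE: "finite E"
  proof -
    have "E \<subseteq> Pow V" using sub by blast
    then show ?thesis using fin finite_subset by blast
  qed
  have fin_edge: "finite f" if "f \<in> E" for f using that sub fin finite_subset by blast
  have two: "2 \<le> card f" if fE: "f \<in> E" for f
  proof -
    have "card f \<noteq> 1" using assms(3) fE unfolding loopless_def by blast
    moreover have "card f \<noteq> 0" using ne fE fin_edge[OF fE] by simp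
    ultimately show ?thesis by linarith
  qed
  have ex: "\<exists>c. proper_edge_colouring E c n"
  proof (cases "\<forall>S\<subseteq>E. S \<noteq> {} \<longrightarrow> (\<exists>e\<in>S. card (nb S e) < n)")
    case True
    then show ?thesis using greedy_aux[OF finE True, of E] by blast
  next
    case False
    then obtain S where SE: "S \<subseteq> E" and Sne: "S \<noteq> {}" and bad0: "\<not> (\<exists>e\<in>S. card (nb S e) < n)"
      by blast
    have bad: "\<forall>e\<in>S. n \<le> card (nb S e)" using bad0 by (simp add: not_less)
    have fS: "finite S" using SE finE finite_subset by blast
    define k where "k = Min (card ` S)"
    have "k \<in> card ` S" unfolding k_def using fS Sne by simp
    then obtain e where eS: "e \<in> S" and ek: "card e = k" by blast
    have mn: "\<forall>f\<in>S. card e \<le> card f" using ek fS unfolding k_def by simp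
    have eE: "e \<in> E" using eS SE by blast
    have e2: "2 \<le> card e" by (rule two[OF eE])
    have "e \<notin> E''"
    proof
      assume "e \<in> E''"
      then obtain x0 where x0: "x0 \<in> e" and dg: "hdeg E x0 \<le> card e" using assms(9) by blast
      have "card (nb S e) < card V" by (rule good2[OF fin sub lin SE eS mn x0 dg e2 finE])
      moreover have "n \<le> card (nb S e)" using bad eS by blast
      ultimately show False using assms(4) by linarith
    qed
    then have eE': "e \<in> E'" using eE assms(5) by blast
    have finE': "finite E'" using finE assms(5) by simp
    have "antirank E' = ereal (real (Min (card ` E')))" unfolding antirank_def using eE' by auto
    then have "ereal (sqrt (real n)) \<le> ereal (real (Min (card ` E')))" using assms(7) by simp
    then have "sqrt (real n) \<le> real (Min (card ` E'))" by simp
    moreover have "Min (card ` E') \<le> card e" using finE' eE' by simp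
    ultimately have "sqrt (real n) \<le> real (card e)" by linarith
    then have "real n \<le> (real (card e))\<^sup>2" by (rule sqrt_le_D)
    then have "real n \<le> real (card e * card e)" by (simp add: power2_eq_square)
    then have nle: "n \<le> card e * card e" by (simp only: of_nat_le_iff)
    have "\<not> card V < card e * card e"
    proof
      assume "card V < card e * card e"
      then have "card (nb S e) < card V" by (rule good1[OF fin sub lin SE eS mn e2])
      moreover have "n \<le> card (nb S e)" using bad eS by blast
      ultimately show False using assms(4) by linarith
    qed
    then have sq: "card V = card e * card e" using nle assms(4) by simp
    have fullx: "(\<forall>y\<in>V. \<exists>g\<in>S. x \<in> g \<and> y \<in> g) \<and> (\<forall>g\<in>S. x \<in> g \<longrightarrow> card g = card e)"
      if fS': "f \<in> S" and cf: "card f = card e" and xf: "x \<in> f" for f x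
    proof -
      have mnf: "\<forall>g\<in>S. card f \<le> card g" using mn cf by simp
      have f2: "2 \<le> card f" using e2 cf by simp
      have sqf: "card V = card f * card f" using sq cf by simp
      have mf: "card V \<le> card (nb S f)" using bad fS' assms(4) by simp
      show ?thesis using degen[OF fin sub lin SE fS' mnf f2 sqf mf xf] cf by simp
    qed
    obtain x where xe: "x \<in> e" using ne eE by blast
    have fullS: "(\<forall>z\<in>V. \<exists>g\<in>S. y \<in> g \<and> z \<in> g) \<and> (\<forall>g\<in>S. y \<in> g \<longrightarrow> card g = card e)"
      if yV: "y \<in> V" for y
    proof -
      have F: "(\<forall>y\<in>V. \<exists>g\<in>S. x \<in> g \<and> y \<in> g) \<and> (\<forall>g\<in>S. x \<in> g \<longrightarrow> card g = card e)"
        by (rule fullx[OF eS refl xe])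
      obtain g where gS: "g \<in> S" and xg: "x \<in> g" and yg: "y \<in> g" using F yV by blast
      have cg: "card g = card e" using F gS xg by blast
      show ?thesis by (rule fullx[OF gS cg yg])
    qed
    have fullE: "\<forall>y\<in>V. (\<forall>z\<in>V. \<exists>g\<in>E. y \<in> g \<and> z \<in> g) \<and> (\<forall>g\<in>E. y \<in> g \<longrightarrow> card g = card e)"
    proof (intro ballI conjI impI)
      fix y z assume "y \<in> V" "z \<in> V"
      then have "\<exists>g\<in>S. y \<in> g \<and> z \<in> g" using fullS by blast
      then show "\<exists>g\<in>E. y \<in> g \<and> z \<in> g" using SE by blast
    next
      fix y g assume yV: "y \<in> V" and gE: "g \<in> E" and yg: "y \<in> g"
      have "card (g - {y}) = card g - 1" using yg fin_edge[OF gE] by simp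
      then have "card (g - {y}) \<noteq> 0" using two[OF gE] by simp
      then have "g - {y} \<noteq> {}" by (metis card.empty)
      then obtain z where zg: "z \<in> g" and zy: "y \<noteq> z" by blast
      have zV: "z \<in> V" using zg gE sub by blast
      obtain g' where g'S: "g' \<in> S" and yg': "y \<in> g'" and zg': "z \<in> g'" using fullS[OF yV] zV by blast
      have g'E: "g' \<in> E" using g'S SE by blast
      have "g = g'" by (rule two_points[OF lin gE g'E yg yg' zg zg' zy fin_edge[OF gE]])
      then show "card g = card e" using fullS[OF yV] g'S yg' by blast
    qed
    have A: "aff V E (card e)" unfolding aff_def
      by (intro conjI) (rule fin, rule sub, rule lin, rule ne, rule e2, rule sq, rule fullE)
    have "E \<noteq> {}" using eE by blast
    then have "\<exists>c. proper_edge_colouring E c (card V)" by (rule aff.colour[OF A])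
    then show ?thesis using assms(4) by simp
  qed
  then show ?thesis unfolding chromatic_index_def by (rule Least_le)
qed

end
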